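(* Consider the system \[ \begin{aligned} \dot S_h(t)&=\beta_h-C_{vh}\frac{I_v(t)}{N_v(t)}S_h(t)-\mu_hS_h(t),\\ \dot I_h(t)&=C_{vh}\frac{I_v(t-\tau)}{N_v(t-\tau)}S_h(t-\tau)-\mu_hI_h(t),\\ \dot S_v(t)&=\beta_v-C_{hv}I_h(t)S_v(t)-\mu_vS_v(t),\\ \dot I_v(t)&=C_{hv}I_h(t)S_v(t)-\mu_vI_v(t), \end{aligned} \] with $N_v=S_v+I_v$ and positive parameters $\beta_h,\beta_v,\mu_h,\mu_v,C_{vh},C_{hv}$. Let $R_0=\sqrt{C_{vh}C_{hv}\beta_h/(\mu_h^2\mu_v)}$. If $R_0>1$, then for every $\tau\ge0$ the system is weakly persistent in $D$.
   Context: $C_+=\{\varphi\in C([-\tau,0],\mathbb{R}_+^4):\varphi_3(\theta)+\varphi_4(\theta)>0\ \forall\theta\in[-\tau,0]\}$ with the sup-norm, and $D=\{\varphi\in C_+:\varphi_2(0)>0\}$. The system is called weakly persistent (in $D$) if for the solution through any $\varphi\in D$, $\limsup_{t\to\infty}u(t)>0$ for each $u\in\{S_h,I_h,S_v,I_v\}$. *)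

theory Defs
  imports "HOL-Analysis.Analysis" "HOL-Library.Liminf_Limsup"
begin

text \<open>Initial data: four real functions on [-tau,0] (components S_h, I_h, S_v, I_v).
  Phase space C_+: continuous, nonnegative, with phi3 + phi4 > 0 on [-tau,0].\<close>

definition C_plus :: "real \<Rightarrow> (real \<Rightarrow> real) \<Rightarrow> (real \<Rightarrow> real) \<Rightarrow> (real \<Rightarrow> real) \<Rightarrow> (real \<Rightarrow> real) \<Rightarrow> bool" where
  "C_plus tau p1 p2 p3 p4 \<longleftrightarrow>
     continuous_on {-tau..0} p1 \<and> continuous_on {-tau..0} p2 \<and>
     continuous_on {-tau..0} p3 \<and> continuous_on {-tau..0} p4 \<and>
     (\<forall>\<theta>\<in>{-tau..0}. p1 \<theta> \<ge> 0 \<and> p2 \<theta> \<ge> 0 \<and> p3 \<theta> \<ge> 0 \<and> p4 \<theta> \<ge> 0 \<and> p3 \<theta> + p4 \<theta> > 0)"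

definition D_set :: "real \<Rightarrow> (real \<Rightarrow> real) \<Rightarrow> (real \<Rightarrow> real) \<Rightarrow> (real \<Rightarrow> real) \<Rightarrow> (real \<Rightarrow> real) \<Rightarrow> bool" where
  "D_set tau p1 p2 p3 p4 \<longleftrightarrow> C_plus tau p1 p2 p3 p4 \<and> p2 0 > 0"

definition is_solution ::
  "real \<Rightarrow> real \<Rightarrow> real \<Rightarrow> real \<Rightarrow> real \<Rightarrow> real \<Rightarrow> real \<Rightarrow>
   (real \<Rightarrow> real) \<Rightarrow> (real \<Rightarrow> real) \<Rightarrow> (real \<Rightarrow> real) \<Rightarrow> (real \<Rightarrow> real) \<Rightarrow>
   (real \<Rightarrow> real) \<Rightarrow> (real \<Rightarrow> real) \<Rightarrow> (real \<Rightarrow> real) \<Rightarrow> (real \<Rightarrow> real) \<Rightarrow> bool" where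
  "is_solution \<beta>h \<beta>v \<mu>h \<mu>v Cvh Chv tau p1 p2 p3 p4 Sh Ih Sv Iv \<longleftrightarrow>
     (\<forall>\<theta>\<in>{-tau..0}. Sh \<theta> = p1 \<theta> \<and> Ih \<theta> = p2 \<theta> \<and> Sv \<theta> = p3 \<theta> \<and> Iv \<theta> = p4 \<theta>) \<and>
     continuous_on {-tau..} Sh \<and> continuous_on {-tau..} Ih \<and>
     continuous_on {-tau..} Sv \<and> continuous_on {-tau..} Iv \<and>
     (\<forall>t\<ge>0.
        (Sh has_real_derivative
           (\<beta>h - Cvh * Iv t / (Sv t + Iv t) * Sh t - \<mu>h * Sh t)) (at t within {0..}) \<and>
        (Ih has_real_derivative
           (Cvh * Iv (t - tau) / (Sv (t - tau) + Iv (t - tau)) * Sh (t - tau) - \<mu>h * Ih t))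
           (at t within {0..}) \<and>
        (Sv has_real_derivative
           (\<beta>v - Chv * Ih t * Sv t - \<mu>v * Sv t)) (at t within {0..}) \<and>
        (Iv has_real_derivative
           (Chv * Ih t * Sv t - \<mu>v * Iv t)) (at t within {0..}))"

definition weakly_persistent ::
  "real \<Rightarrow> real \<Rightarrow> real \<Rightarrow> real \<Rightarrow> real \<Rightarrow> real \<Rightarrow> real \<Rightarrow> bool" where
  "weakly_persistent \<beta>h \<beta>v \<mu>h \<mu>v Cvh Chv tau \<longleftrightarrow>
     (\<forall>p1 p2 p3 p4 Sh Ih Sv Iv.
        D_set tau p1 p2 p3 p4 \<longrightarrow>
        is_solution \<beta>h \<beta>v \<mu>h \<mu>v Cvh Chv tau p1 p2 p3 p4 Sh Ih Sv Iv \<longrightarrow>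
        Limsup at_top (\<lambda>t. ereal (Sh t)) > 0 \<and> Limsup at_top (\<lambda>t. ereal (Ih t)) > 0 \<and>
        Limsup at_top (\<lambda>t. ereal (Sv t)) > 0 \<and> Limsup at_top (\<lambda>t. ereal (Iv t)) > 0)"

end

theory Submission
  imports Defs
begin


lemma core_mono:
  fixes x x' :: "real \<Rightarrow> real"
  assumes "T \<le> u" "continuous_on {T..u} x"
    and "\<And>t. T < t \<Longrightarrow> t < u \<Longrightarrow> (x has_real_derivative x' t) (at t) \<and> x' t + a * x t \<ge> 0"
  shows "x T * exp (a * T) \<le> x u * exp (a * u)"
proof (rule DERIV_nonneg_imp_increasing_open[OF assms(1)])
  fix t assume t: "T < t" "t < u"
  from assms(3)[OF t] have d: "(x has_real_derivative x' t) (at t)" and nn: "x' t + a * x t \<ge> 0" by auto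
  have "((\<lambda>t. x t * exp (a * t)) has_real_derivative (x' t * exp (a*t) + x t * (exp (a*t) * a))) (at t)"
    by (auto intro!: derivative_eq_intros d)
  moreover have "x' t * exp (a*t) + x t * (exp (a*t) * a) = exp (a*t) * (x' t + a * x t)"
    by (simp add: algebra_simps)
  moreover have "exp (a*t) * (x' t + a * x t) \<ge> 0" using nn by simp
  ultimately show "\<exists>y. ((\<lambda>t. x t * exp (a * t)) has_real_derivative y) (at t) \<and> 0 \<le> y" by metis
next
  show "continuous_on {T..u} (\<lambda>t. x t * exp (a * t))"
    by (intro continuous_intros assms(2))
qed

lemma cmp_up:
  fixes f f' :: "real \<Rightarrow> real"
  assumes "\<mu> > 0" "continuous_on {T..} f"
    and "\<And>t. T < t \<Longrightarrow> (f has_real_derivative f' t) (at t)"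
    and "\<And>t. T < t \<Longrightarrow> f' t \<le> A - \<mu> * f t"
    and "T \<le> t"
  shows "f t \<le> A/\<mu> + (f T - A/\<mu>) * exp (-\<mu>*(t-T))"
proof -
  have "(A/\<mu> - f T) * exp (\<mu> * T) \<le> (A/\<mu> - f t) * exp (\<mu> * t)"
  proof (rule core_mono[where x'="\<lambda>t. - f' t"])
    show "T \<le> t" by fact
    show "continuous_on {T..t} (\<lambda>t. A / \<mu> - f t)"
      by (intro continuous_intros continuous_on_subset[OF assms(2)]) auto
    fix s assume s: "T < s" "s < t"
    have "((\<lambda>t. A / \<mu> - f t) has_real_derivative - f' s) (at s)"
      by (auto intro!: derivative_eq_intros assms(3) s)
    moreover have "- f' s + \<mu> * (A / \<mu> - f s) \<ge> 0" using assms(4)[OF s(1)] assms(1)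
      by (simp add: algebra_simps)
    ultimately show "((\<lambda>t. A / \<mu> - f t) has_real_derivative - f' s) (at s) \<and> 0 \<le> - f' s + \<mu> * (A / \<mu> - f s)" by blast
  qed
  then have "(A/\<mu> - f T) * exp (\<mu> * T) * exp (-\<mu>*t) \<le> (A/\<mu> - f t) * exp (\<mu> * t) * exp (-\<mu>*t)"
    by (simp add: mult_right_mono)
  moreover have "exp (\<mu> * t) * exp (-\<mu>*t) = 1" by (simp flip: exp_add)
  moreover have "exp (\<mu> * T) * exp (-\<mu>*t) = exp (-\<mu>*(t-T))" by (simp flip: exp_add add: algebra_simps)
  ultimately have "(A/\<mu> - f T) * exp (-\<mu>*(t-T)) \<le> (A/\<mu> - f t)"
    by (metis mult.assoc mult.right_neutral)
  then show ?thesis by (simp add: algebra_simps)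
qed

lemma cmp_lo:
  fixes f f' :: "real \<Rightarrow> real"
  assumes "\<mu> > 0" "continuous_on {T..} f"
    and "\<And>t. T < t \<Longrightarrow> (f has_real_derivative f' t) (at t)"
    and "\<And>t. T < t \<Longrightarrow> f' t \<ge> A - \<mu> * f t"
    and "T \<le> t"
  shows "f t \<ge> A/\<mu> + (f T - A/\<mu>) * exp (-\<mu>*(t-T))"
proof -
  have "- f t \<le> (-A)/\<mu> + (- f T - (-A)/\<mu>) * exp (-\<mu>*(t-T))"
  proof (rule cmp_up[where f'="\<lambda>t. - f' t"])
    show "continuous_on {T..} (\<lambda>t. - f t)" by (intro continuous_intros assms(2))
    fix s assume s: "T < s"
    show "((\<lambda>t. - f t) has_real_derivative - f' s) (at s)"
      by (auto intro!: derivative_eq_intros assms(3) s)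
    show "- f' s \<le> - A - \<mu> * - f s" using assms(4)[OF s] by simp
  qed (use assms in auto)
  then show ?thesis by (simp add: algebra_simps)
qed

lemma exp_small:
  fixes c \<mu> T \<epsilon> :: real
  assumes "\<mu> > 0" "\<epsilon> > 0"
  shows "eventually (\<lambda>t. c * exp (-\<mu>*(t-T)) \<le> \<epsilon>) at_top"
proof (cases "c \<le> 0")
  case True
  have "c * exp (-\<mu>*(t-T)) \<le> \<epsilon>" for t
  proof -
    have "c * exp (-\<mu>*(t-T)) \<le> 0" using True by (simp add: mult_nonpos_nonneg)
    then show ?thesis using assms(2) by linarith
  qed
  then show ?thesis by simp
next
  case False
  then have c: "c > 0" by simp
  show ?thesis unfolding eventually_at_top_linorder
  proof (intro exI allI impI)
    fix t assume t: "t \<ge> T + ln (c/\<epsilon>)/\<mu>"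
    then have "\<mu> * (t - T) \<ge> ln (c/\<epsilon>)" using assms by (simp add: field_simps)
    then have "-\<mu>*(t-T) \<le> ln (\<epsilon>/c)" using c assms by (simp add: ln_div)
    then have "exp (-\<mu>*(t-T)) \<le> \<epsilon>/c" using c assms
      by (metis divide_pos_pos exp_le_cancel_iff exp_ln)
    then show "c * exp (-\<mu>*(t-T)) \<le> \<epsilon>" using c by (simp add: field_simps)
  qed
qed

lemma cmp_up_ev:
  fixes f f' :: "real \<Rightarrow> real"
  assumes "\<mu> > 0" "continuous_on {T..} f"
    and "\<And>t. T < t \<Longrightarrow> (f has_real_derivative f' t) (at t)"
    and "\<And>t. T < t \<Longrightarrow> f' t \<le> A - \<mu> * f t"
    and "\<epsilon> > 0"
  shows "eventually (\<lambda>t. f t \<le> A/\<mu> + \<epsilon>) at_top"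
  using exp_small[OF assms(1,5), of "f T - A/\<mu>" T] eventually_ge_at_top[of T]
proof eventually_elim
  case (elim t)
  then show ?case using cmp_up[OF assms(1-4), of t] by simp
qed

lemma cmp_lo_ev:
  fixes f f' :: "real \<Rightarrow> real"
  assumes "\<mu> > 0" "continuous_on {T..} f"
    and "\<And>t. T < t \<Longrightarrow> (f has_real_derivative f' t) (at t)"
    and "\<And>t. T < t \<Longrightarrow> f' t \<ge> A - \<mu> * f t"
    and "\<epsilon> > 0"
  shows "eventually (\<lambda>t. f t \<ge> A/\<mu> - \<epsilon>) at_top"
  using exp_small[OF assms(1,5), of "A/\<mu> - f T" T] eventually_ge_at_top[of T]
proof eventually_elim
  case (elim t)
  then show ?case using cmp_lo[OF assms(1-4), of t] by (simp add: algebra_simps)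
qed

lemma cmp_up_bd:
  fixes f f' :: "real \<Rightarrow> real"
  assumes "\<mu> > 0" "continuous_on {T..} f"
    and "\<And>t. T < t \<Longrightarrow> (f has_real_derivative f' t) (at t)"
    and "\<And>t. T < t \<Longrightarrow> f' t \<le> A - \<mu> * f t"
    and "T \<le> t"
  shows "f t \<le> max (f T) (A/\<mu>)"
proof -
  have e: "exp (-\<mu>*(t-T)) \<le> 1" "exp (-\<mu>*(t-T)) > 0" using assms(1,5) by auto
  have "(f T - A/\<mu>) * exp (-\<mu>*(t-T)) \<le> max 0 (f T - A/\<mu>)"
  proof (cases "f T - A/\<mu> \<le> 0")
    case True then show ?thesis using e by (simp add: mult_nonpos_nonneg)
  next
    case False then show ?thesis using e mult_left_le[of "exp (-\<mu>*(t-T))" "f T - A/\<mu>"] by auto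
  qed
  then show ?thesis using cmp_up[OF assms] by linarith
qed

lemma cmp_lo_bd:
  fixes f f' :: "real \<Rightarrow> real"
  assumes "\<mu> > 0" "continuous_on {T..} f"
    and "\<And>t. T < t \<Longrightarrow> (f has_real_derivative f' t) (at t)"
    and "\<And>t. T < t \<Longrightarrow> f' t \<ge> A - \<mu> * f t"
    and "T \<le> t"
  shows "f t \<ge> min (f T) (A/\<mu>)"
proof -
  have e: "exp (-\<mu>*(t-T)) \<le> 1" "exp (-\<mu>*(t-T)) > 0" using assms(1,5) by auto
  have "(f T - A/\<mu>) * exp (-\<mu>*(t-T)) \<ge> min 0 (f T - A/\<mu>)"
  proof (cases "f T - A/\<mu> \<ge> 0")
    case True then show ?thesis using e by simp
  next
    case False then show ?thesis using e mult_left_le[of "exp (-\<mu>*(t-T))" "A/\<mu> - f T"] 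
      by (auto simp: algebra_simps)
  qed
  then show ?thesis using cmp_lo[OF assms] by linarith
qed



lemma pos_exit:
  fixes f :: "real \<Rightarrow> real"
  assumes cont: "continuous_on {0..} f" and f0: "f 0 \<ge> 0"
    and dz: "\<And>t. t \<ge> 0 \<Longrightarrow> f t = 0 \<Longrightarrow> \<exists>D>0. (f has_real_derivative D) (at t within {0..})"
  shows "\<forall>t\<ge>0. f t \<ge> 0"
proof (rule ccontr)
  assume "\<not> (\<forall>t\<ge>0. f t \<ge> 0)"
  then obtain t1 where t1: "t1 \<ge> 0" "f t1 < 0" by auto
  define F where "F = {t. t \<ge> 0 \<and> f t < 0}"
  have Fne: "F \<noteq> {}" using t1 F_def by auto
  have bdd: "bdd_below F" unfolding F_def by (rule bdd_belowI[of _ 0]) auto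
  define s where "s = Inf F"
  have s0: "s \<ge> 0" unfolding s_def by (rule cInf_greatest[OF Fne]) (auto simp: F_def)
  have below: "f t \<ge> 0" if "0 \<le> t" "t < s" for t
  proof (rule ccontr)
    assume "\<not> f t \<ge> 0"
    then have "t \<in> F" using that by (auto simp: F_def)
    then have "s \<le> t" unfolding s_def by (rule cInf_lower[OF _ bdd])
    then show False using that by simp
  qed
  have contS: "\<forall>e>0. \<exists>d>0. \<forall>x'\<in>{0..}. dist x' s < d \<longrightarrow> dist (f x') (f s) < e"
    using cont s0 unfolding continuous_on_iff by auto
  have fs: "f s \<ge> 0"
  proof (cases "s = 0")
    case True then show ?thesis using f0 by simp
  next
    case False
    show ?thesis
    proof (rule ccontr)
      assume "\<not> f s \<ge> 0"
      then obtain d where d: "d > 0" "\<forall>x'\<in>{0..}. dist x' s < d \<longrightarrow> dist (f x') (f s) < - f s"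
        using contS by (metis neg_0_less_iff_less not_le)
      define t where "t = max 0 (s - d/2)"
      have "t \<ge> 0" "t < s" "dist t s < d" using d False s0 by (auto simp: t_def dist_real_def)
      then have "\<bar>f t - f s\<bar> < - f s" using d(2) \<open>t \<ge> 0\<close> by (auto simp: dist_real_def)
      then have "f t < 0" by linarith
      then show False using below \<open>t \<ge> 0\<close> \<open>t < s\<close> by fastforce
    qed
  qed
  obtain \<delta> where \<delta>: "\<delta> > 0" "\<And>t. s \<le> t \<Longrightarrow> t < s + \<delta> \<Longrightarrow> f t \<ge> 0"
  proof (cases "f s > 0")
    case True
    then obtain d where d: "d > 0" "\<forall>x'\<in>{0..}. dist x' s < d \<longrightarrow> dist (f x') (f s) < f s"
      using contS by blast
    show ?thesis
    proof (rule that[OF d(1)])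
      fix t assume "s \<le> t" "t < s + d"
      then have "dist (f t) (f s) < f s" using d(2) s0 by (auto simp: dist_real_def)
      then show "f t \<ge> 0" by (auto simp: dist_real_def)
    qed
  next
    case False
    then have "f s = 0" using fs by simp
    then obtain D where D: "D > 0" "(f has_real_derivative D) (at s within {0..})" using dz s0 by blast
    obtain d where d: "d > 0" "\<forall>h>0. s + h \<in> {0..} \<longrightarrow> h < d \<longrightarrow> f s < f (s + h)"
      using has_real_derivative_pos_inc_right[OF D(2) D(1)] by blast
    show ?thesis
    proof (rule that[OF d(1)])
      fix t assume t: "s \<le> t" "t < s + d"
      show "f t \<ge> 0"
      proof (cases "t = s")
        case True then show ?thesis using fs by simp
      next
        case False
        then have "t - s > 0" "t - s < d" using t by auto
        have "s + (t - s) \<in> {0..}" using s0 t by auto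
        then have "f s < f (s + (t - s))" using d(2) \<open>t - s > 0\<close> \<open>t - s < d\<close> by blast
        then show ?thesis using fs by simp
      qed
    qed
  qed
  have "Inf F < s + \<delta>" using \<delta> s_def by simp
  then obtain x where x: "x \<in> F" "x < s + \<delta>" using cInf_less_iff[OF Fne bdd] by auto
  have "s \<le> x" unfolding s_def by (rule cInf_lower[OF x(1) bdd])
  then have "f x \<ge> 0" using \<delta>(2) x(2) by simp
  then show False using x(1) by (simp add: F_def)
qed

lemma pos_coupled:
  fixes x y x' y' :: "real \<Rightarrow> real"
  assumes cx: "continuous_on {0..} x" and cy: "continuous_on {0..} y"
    and x0: "x 0 > 0" and y0: "y 0 \<ge> 0"
    and dx: "\<And>t. t > 0 \<Longrightarrow> (x has_real_derivative x' t) (at t)"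
    and dy: "\<And>t. t > 0 \<Longrightarrow> (y has_real_derivative y' t) (at t)"
    and hx: "\<And>t. t > 0 \<Longrightarrow> (\<forall>s\<in>{0..t}. y s \<ge> 0) \<Longrightarrow> x' t + a * x t \<ge> 0"
    and hy: "\<And>t. t > 0 \<Longrightarrow> x t \<ge> 0 \<Longrightarrow> y' t + b * y t \<ge> 0"
  shows "\<forall>t\<ge>0. x t > 0 \<and> y t \<ge> 0"
proof (rule ccontr)
  assume "\<not> (\<forall>t\<ge>0. x t > 0 \<and> y t \<ge> 0)"
  then obtain t1 where t1: "t1 \<ge> 0" "\<not> (x t1 > 0 \<and> y t1 \<ge> 0)" by auto
  define F where "F = {t. t \<ge> 0 \<and> \<not> (x t > 0 \<and> y t \<ge> 0)}"
  have Fne: "F \<noteq> {}" using t1 F_def by auto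
  have bdd: "bdd_below F" unfolding F_def by (rule bdd_belowI[of _ 0]) auto
  define s where "s = Inf F"
  have s0: "s \<ge> 0" unfolding s_def by (rule cInf_greatest[OF Fne]) (auto simp: F_def)
  have below: "x t > 0 \<and> y t \<ge> 0" if "0 \<le> t" "t < s" for t
  proof (rule ccontr)
    assume "\<not> (x t > 0 \<and> y t \<ge> 0)"
    then have "t \<in> F" using that by (auto simp: F_def)
    then have "s \<le> t" unfolding s_def by (rule cInf_lower[OF _ bdd])
    then show False using that by simp
  qed
  have ymono: "y u \<ge> 0" if "0 \<le> u" "\<And>t. 0 < t \<Longrightarrow> t < u \<Longrightarrow> x t \<ge> 0" for u
  proof -
    have "y 0 * exp (b * 0) \<le> y u * exp (b * u)"
    proof (rule core_mono[where x'=y'])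
      show "continuous_on {0..u} y" using cy by (rule continuous_on_subset) auto
    qed (use that dy hy in auto)
    then have "0 \<le> y u * exp (b * u)" using y0 by simp
    then show ?thesis by (simp add: zero_le_mult_iff)
  qed
  have xs: "x s > 0"
  proof -
    have "x 0 * exp (a * 0) \<le> x s * exp (a * s)"
    proof (rule core_mono[where x'=x'])
      show "continuous_on {0..s} x" using cx by (rule continuous_on_subset) auto
      fix t assume t: "0 < t" "t < s"
      have "\<forall>u\<in>{0..t}. y u \<ge> 0" using below t by auto
      then show "(x has_real_derivative x' t) (at t) \<and> 0 \<le> x' t + a * x t"
        using dx hx t by auto
    qed (use s0 in auto)
    then have "0 < x s * exp (a * s)" using x0 by simp
    then show ?thesis by (simp add: zero_less_mult_iff)
  qed
  obtain d where d: "d > 0" "\<forall>x'\<in>{0..}. dist x' s < d \<longrightarrow> dist (x x') (x s) < x s"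
    using cx s0 xs unfolding continuous_on_iff by (meson atLeast_iff)
  have good: "x t > 0 \<and> y t \<ge> 0" if "s \<le> t" "t < s + d" for t
  proof -
    have xpos: "x u > 0" if "0 \<le> u" "u < s + d" for u
    proof (cases "u < s")
      case True then show ?thesis using below that by auto
    next
      case False
      then have "dist (x u) (x s) < x s" using d(2) that by (auto simp: dist_real_def)
      then show ?thesis by (auto simp: dist_real_def)
    qed
    have "x t > 0" using xpos that s0 by auto
    moreover have "y t \<ge> 0"
    proof (rule ymono)
      show "0 \<le> t" using that s0 by simp
      fix u assume "0 < u" "u < t"
      then show "x u \<ge> 0" using xpos[of u] that by simp
    qed
    ultimately show ?thesis by simp
  qed
  have "Inf F < s + d" using d s_def by simp
  then obtain z where z: "z \<in> F" "z < s + d" using cInf_less_iff[OF Fne bdd] by auto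
  have "s \<le> z" unfolding s_def by (rule cInf_lower[OF z(1) bdd])
  then show False using good[of z] z by (simp add: F_def)
qed



lemma int_deriv:
  fixes g :: "real \<Rightarrow> real"
  assumes "continuous_on {0..} g" "u > 0"
  shows "((\<lambda>u. integral {0..u} g) has_real_derivative g u) (at u)"
proof -
  have "((\<lambda>u. integral {0..u} g) has_real_derivative g u) (at u within {0..u+1})"
    by (rule integral_has_real_derivative) (use assms in \<open>auto intro: continuous_on_subset\<close>)
  moreover have "at u within {0..u+1} = at u"
    by (rule at_within_interior) (use assms in \<open>simp add: interior_atLeastAtMost_real\<close>)
  ultimately show ?thesis by simp
qed

lemma at_pos: "(t::real) > 0 \<Longrightarrow> at t within {0..} = at t"
  by (rule at_within_interior) (simp add: interior_real_atLeast)

lemma Limsup_small: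
  fixes f :: "real \<Rightarrow> real"
  assumes "Limsup at_top (\<lambda>t. ereal (f t)) \<le> 0" "e > 0"
  shows "eventually (\<lambda>t. f t \<le> e) at_top"
proof -
  have "eventually (\<lambda>t. ereal e > ereal (f t)) at_top"
  proof -
    have "\<forall>y>0. \<forall>\<^sub>F x in at_top. ereal (f x) < y" using assms(1) Limsup_le_iff[of at_top "\<lambda>t. ereal (f t)" 0] by auto
    then show ?thesis using assms(2) by (metis ereal_less(2))
  qed
  then show ?thesis by eventually_elim simp
qed

lemma Limsup_pos:
  fixes f :: "real \<Rightarrow> real"
  assumes "eventually (\<lambda>t. f t \<ge> c) at_top" "c > 0"
  shows "Limsup at_top (\<lambda>t. ereal (f t)) > 0"
proof -
  have "ereal c \<le> Limsup at_top (\<lambda>t. ereal (f t))"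
    by (rule le_Limsup) (use assms in auto)
  then show ?thesis using assms(2) by (metis ereal_less(2) less_le_trans)
qed



lemma half_pos: "(c::real) > 0 \<Longrightarrow> c - c/2 > 0" by simp

lemma comb: fixes P Q a b c d m e :: real
  assumes "P \<ge> a*b - m*c" "Q \<ge> m*c - e*d" "(a - e)*d \<ge> 0"
  shows "P + Q + a*(d - b) \<ge> 0"
  using assms by (simp add: algebra_simps)

lemma main:
  fixes \<beta>h \<beta>v \<mu>h \<mu>v Cvh Chv tau :: real
  assumes pars: "\<beta>h > 0" "\<beta>v > 0" "\<mu>h > 0" "\<mu>v > 0" "Cvh > 0" "Chv > 0"
    and R: "Cvh * Chv * \<beta>h > \<mu>h ^ 2 * \<mu>v" and tau: "tau \<ge> 0"
    and D: "D_set tau p1 p2 p3 p4"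
    and sol: "is_solution \<beta>h \<beta>v \<mu>h \<mu>v Cvh Chv tau p1 p2 p3 p4 Sh Ih Sv Iv"
  shows "Limsup at_top (\<lambda>t. ereal (Sh t)) > 0 \<and> Limsup at_top (\<lambda>t. ereal (Ih t)) > 0 \<and>
        Limsup at_top (\<lambda>t. ereal (Sv t)) > 0 \<and> Limsup at_top (\<lambda>t. ereal (Iv t)) > 0"
proof -
  note ps = pars
  have init: "\<And>\<theta>. \<theta> \<in> {-tau..0} \<Longrightarrow> Sh \<theta> = p1 \<theta> \<and> Ih \<theta> = p2 \<theta> \<and> Sv \<theta> = p3 \<theta> \<and> Iv \<theta> = p4 \<theta>"
    using sol unfolding is_solution_def by blast
  have contA: "continuous_on {-tau..} Sh" "continuous_on {-tau..} Ih"
      "continuous_on {-tau..} Sv" "continuous_on {-tau..} Iv"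
    using sol unfolding is_solution_def by blast+
  have cont: "continuous_on {0..} Sh" "continuous_on {0..} Ih"
      "continuous_on {0..} Sv" "continuous_on {0..} Iv"
    using contA tau by (auto intro: continuous_on_subset)
  have derW: "\<And>t. t \<ge> 0 \<Longrightarrow>
        (Sh has_real_derivative
           (\<beta>h - Cvh * Iv t / (Sv t + Iv t) * Sh t - \<mu>h * Sh t)) (at t within {0..}) \<and>
        (Ih has_real_derivative
           (Cvh * Iv (t - tau) / (Sv (t - tau) + Iv (t - tau)) * Sh (t - tau) - \<mu>h * Ih t))
           (at t within {0..}) \<and>
        (Sv has_real_derivative
           (\<beta>v - Chv * Ih t * Sv t - \<mu>v * Sv t)) (at t within {0..}) \<and>
        (Iv has_real_derivative
           (Chv * Ih t * Sv t - \<mu>v * Iv t)) (at t within {0..})"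
    using sol unfolding is_solution_def by blast
  define N where "N = (\<lambda>t. Sv t + Iv t)"
  define dSh where "dSh = (\<lambda>t. \<beta>h - Cvh * Iv t / N t * Sh t - \<mu>h * Sh t)"
  define dIh where "dIh = (\<lambda>t. Cvh * Iv (t - tau) / N (t - tau) * Sh (t - tau) - \<mu>h * Ih t)"
  define dSv where "dSv = (\<lambda>t. \<beta>v - Chv * Ih t * Sv t - \<mu>v * Sv t)"
  define dIv where "dIv = (\<lambda>t. Chv * Ih t * Sv t - \<mu>v * Iv t)"
  have dW: "(Sh has_real_derivative dSh t) (at t within {0..})"
     "(Ih has_real_derivative dIh t) (at t within {0..})"
     "(Sv has_real_derivative dSv t) (at t within {0..})"
     "(Iv has_real_derivative dIv t) (at t within {0..})" if "t \<ge> 0" for t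
    using derW[OF that] unfolding dSh_def dIh_def dSv_def dIv_def N_def by auto
  have d: "(Sh has_real_derivative dSh t) (at t)"
     "(Ih has_real_derivative dIh t) (at t)"
     "(Sv has_real_derivative dSv t) (at t)"
     "(Iv has_real_derivative dIv t) (at t)" if "t > 0" for t
    using dW[of t] at_pos[OF that] that by auto
  have dN: "(N has_real_derivative (\<beta>v - \<mu>v * N t)) (at t)" if "t > 0" for t
  proof -
    have "(N has_real_derivative dSv t + dIv t) (at t)"
      unfolding N_def by (intro DERIV_add d that)
    moreover have "dSv t + dIv t = \<beta>v - \<mu>v * N t"
      unfolding dSv_def dIv_def N_def by (simp add: algebra_simps)
    ultimately show ?thesis by simp
  qed
  have cN: "continuous_on {0..} N" unfolding N_def by (intro continuous_intros cont)
  have z: "0 \<in> {-tau..0}" using tau by simp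
  have Cp: "\<And>\<theta>. \<theta> \<in> {-tau..0} \<Longrightarrow> p1 \<theta> \<ge> 0 \<and> p2 \<theta> \<ge> 0 \<and> p3 \<theta> \<ge> 0 \<and> p4 \<theta> \<ge> 0 \<and> p3 \<theta> + p4 \<theta> > 0"
    using D unfolding D_set_def C_plus_def by blast
  have p20: "p2 0 > 0" using D unfolding D_set_def by blast
  have cp1: "continuous_on {-tau..0} p1" using D unfolding D_set_def C_plus_def by blast
  have initN: "\<And>\<theta>. \<theta> \<in> {-tau..0} \<Longrightarrow> N \<theta> > 0 \<and> Sh \<theta> \<ge> 0 \<and> Iv \<theta> \<ge> 0 \<and> Sv \<theta> \<ge> 0 \<and> Ih \<theta> \<ge> 0"
    using init Cp unfolding N_def by auto
  define Nl where "Nl = min (N 0) (\<beta>v/\<mu>v)"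
  define NU where "NU = max (N 0) (\<beta>v/\<mu>v)"
  have Nl: "Nl > 0" unfolding Nl_def using initN[OF z] ps by simp
  have NlN: "N t \<ge> Nl" if "t \<ge> 0" for t
    unfolding Nl_def by (rule cmp_lo_bd[OF ps(4) cN dN]) (use that in auto)
  have NUN: "N t \<le> NU" if "t \<ge> 0" for t
    unfolding NU_def by (rule cmp_up_bd[OF ps(4) cN dN]) (use that in auto)
  have Npos: "N t > 0" if "t \<ge> -tau" for t
  proof (cases "t \<le> 0")
    case True then show ?thesis using initN[of t] that by auto
  next
    case False then show ?thesis using NlN[of t] Nl by auto
  qed
  have Sh0: "\<forall>t\<ge>0. Sh t \<ge> 0"
  proof (rule pos_exit[OF cont(1)])
    show "Sh 0 \<ge> 0" using initN[OF z] by simp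
    fix t :: real assume "t \<ge> 0" "Sh t = 0"
    then show "\<exists>D>0. (Sh has_real_derivative D) (at t within {0..})"
      using dW(1)[of t] ps unfolding dSh_def by auto
  qed
  have Sv0: "\<forall>t\<ge>0. Sv t \<ge> 0"
  proof (rule pos_exit[OF cont(3)])
    show "Sv 0 \<ge> 0" using initN[OF z] by simp
    fix t :: real assume "t \<ge> 0" "Sv t = 0"
    then show "\<exists>D>0. (Sv has_real_derivative D) (at t within {0..})"
      using dW(3)[of t] ps unfolding dSv_def by auto
  qed
  have ShA: "Sh t \<ge> 0" if "t \<ge> -tau" for t
    using Sh0 initN[of t] that by (cases "t \<le> 0") auto
  have IhIv: "\<forall>t\<ge>0. Ih t > 0 \<and> Iv t \<ge> 0"
  proof (rule pos_coupled[OF cont(2) cont(4) _ _ d(2) d(4), where a=\<mu>h and b=\<mu>v])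
    show "Ih 0 > 0" using init[OF z] p20 by simp
    show "Iv 0 \<ge> 0" using initN[OF z] by simp
  next
    fix t :: real assume t: "t > 0" and y: "\<forall>s\<in>{0..t}. Iv s \<ge> 0"
    have "Iv (t - tau) \<ge> 0"
      using y initN[of "t - tau"] t tau by (cases "t - tau \<le> 0") auto
    moreover have "Sh (t - tau) \<ge> 0" using ShA[of "t - tau"] t by simp
    moreover have "N (t - tau) > 0" using Npos[of "t - tau"] t by simp
    ultimately show "dIh t + \<mu>h * Ih t \<ge> 0" unfolding dIh_def using ps by simp
  next
    fix t :: real assume t: "t > 0" and x: "Ih t \<ge> 0"
    show "dIv t + \<mu>v * Iv t \<ge> 0" unfolding dIv_def using ps x Sv0 t by simp
  qed
  have IvA: "Iv t \<ge> 0" if "t \<ge> -tau" for t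
    using IhIv initN[of t] that by (cases "t \<le> 0") auto
  have IhA: "Ih t \<ge> 0" if "t \<ge> -tau" for t
    using IhIv initN[of t] that by (cases "t \<le> 0") (auto simp: less_imp_le)
  have SvA: "Sv t \<ge> 0" if "t \<ge> -tau" for t
    using Sv0 initN[of t] that by (cases "t \<le> 0") auto
  have rat: "Iv t / N t \<ge> 0" "Iv t / N t \<le> 1" if "t \<ge> -tau" for t
    using IvA[OF that] SvA[OF that] Npos[OF that] by (auto simp: N_def)
  obtain m where m: "m \<in> {-tau..0}" "\<And>y. y \<in> {-tau..0} \<Longrightarrow> p1 y \<le> p1 m"
    using continuous_attains_sup[OF compact_Icc _ cp1] tau by auto
  define MS where "MS = max (p1 m) (max (Sh 0) (\<beta>h/\<mu>h))"
  have MS: "Sh t \<le> MS" if "t \<ge> -tau" for t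
  proof (cases "t \<le> 0")
    case True then show ?thesis using m init[of t] that unfolding MS_def by fastforce
  next
    case False
    have "Sh t \<le> max (Sh 0) (\<beta>h/\<mu>h)"
    proof (rule cmp_up_bd[OF ps(3) cont(1) d(1)])
      fix s :: real assume s: "0 < s"
      have "Cvh * (Iv s / N s) * Sh s \<ge> 0" using ps rat[of s] ShA[of s] s tau by (intro mult_nonneg_nonneg) auto
      then have "Cvh * Iv s / N s * Sh s \<ge> 0" by simp
      then show "dSh s \<le> \<beta>h - \<mu>h * Sh s" unfolding dSh_def by simp
    qed (use False in auto)
    then show ?thesis unfolding MS_def by simp
  qed
  have MS0: "MS \<ge> 0" using ShA[of 0] MS[of 0] tau by simp
  define MI where "MI = max (Ih 0) (Cvh * MS / \<mu>h)"
  have MI: "Ih t \<le> MI" if "t \<ge> 0" for t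
    unfolding MI_def
  proof (rule cmp_up_bd[OF ps(3) cont(2) d(2)])
    fix s :: real assume s: "0 < s"
    have "Iv (s - tau) / N (s - tau) * Sh (s - tau) \<le> 1 * MS"
      by (rule mult_mono) (use rat[of "s - tau"] MS[of "s - tau"] ShA[of "s-tau"] s MS0 in auto)
    then have "Cvh * Iv (s - tau) / N (s - tau) * Sh (s - tau) \<le> Cvh * MS"
      using ps mult_left_mono[of _ _ Cvh] by fastforce
    then show "dIh s \<le> Cvh * MS - \<mu>h * Ih s" unfolding dIh_def by simp
  qed (use that in auto)
  have MI0: "MI \<ge> 0" using MI[of 0] IhA[of 0] tau by simp
  have PSh: "Limsup at_top (\<lambda>t. ereal (Sh t)) > 0"
  proof -
    have c: "\<beta>h/(Cvh+\<mu>h) > 0" using ps by simp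
    have "eventually (\<lambda>t. Sh t \<ge> \<beta>h/(Cvh+\<mu>h) - \<beta>h/(Cvh+\<mu>h)/2) at_top"
    proof (rule cmp_lo_ev[OF _ cont(1) d(1)])
      fix s :: real assume s: "0 < s"
      have "Iv s / N s * Sh s \<le> 1 * Sh s"
        by (rule mult_right_mono) (use rat[of s] ShA[of s] s tau in auto)
      then have "Cvh * Iv s / N s * Sh s \<le> Cvh * Sh s"
        using ps mult_left_mono[of _ _ Cvh] by fastforce
      then show "dSh s \<ge> \<beta>h - (Cvh+\<mu>h) * Sh s" unfolding dSh_def by (simp add: algebra_simps)
    qed (use ps in auto)
    then show ?thesis by (rule Limsup_pos) (rule half_pos[OF c])
  qed
  have PSv: "Limsup at_top (\<lambda>t. ereal (Sv t)) > 0"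
  proof -
    have c: "\<beta>v/(Chv*MI+\<mu>v) > 0" using ps MI0 by (simp add: add_nonneg_pos)
    have "eventually (\<lambda>t. Sv t \<ge> \<beta>v/(Chv*MI+\<mu>v) - \<beta>v/(Chv*MI+\<mu>v)/2) at_top"
    proof (rule cmp_lo_ev[OF _ cont(3) d(3)])
      fix s :: real assume s: "0 < s"
      have "Chv * Ih s * Sv s \<le> Chv * MI * Sv s"
        by (intro mult_right_mono mult_left_mono) (use ps MI[of s] SvA[of s] s tau in auto)
      then show "dSv s \<ge> \<beta>v - (Chv*MI+\<mu>v) * Sv s" unfolding dSv_def by (simp add: algebra_simps)
    next
      show "Chv*MI+\<mu>v > 0" using ps MI0 by (simp add: add_nonneg_pos)
    next
      show "\<beta>v/(Chv*MI+\<mu>v)/2 > 0" using c by (rule half_gt_zero)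
    qed
    then show ?thesis by (rule Limsup_pos) (rule half_pos[OF c])
  qed
  have NU1: "NU + 1 > 0" using NUN[of 0] NlN[of 0] Nl by simp
  have small_Ih_Iv: "\<forall>e>0. eventually (\<lambda>t. Iv t \<le> e) at_top"
    if sIh: "\<forall>e>0. eventually (\<lambda>t. Ih t \<le> e) at_top"
  proof (intro allI impI)
    fix e :: real assume e: "e > 0"
    define e1 where "e1 = e*\<mu>v/(2*Chv*(NU+1))"
    have e1: "e1 > 0" unfolding e1_def using e ps NU1 by simp
    obtain T where T: "\<And>t. t \<ge> T \<Longrightarrow> Ih t \<le> e1"
      using sIh e1 unfolding eventually_at_top_linorder by blast
    define T1 where "T1 = max T 1"
    have "eventually (\<lambda>t. Iv t \<le> (Chv*e1*(NU+1))/\<mu>v + e/2) at_top"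
    proof (rule cmp_up_ev[OF ps(4), where T=T1 and f'=dIv])
      show "continuous_on {T1..} Iv" using cont(4) by (rule continuous_on_subset) (auto simp: T1_def)
      fix t :: real assume t: "T1 < t"
      then have t0: "t > 0" "t \<ge> T" by (auto simp: T1_def)
      show "(Iv has_real_derivative dIv t) (at t)" using d(4)[OF t0(1)] .
      have "Sv t \<le> NU + 1" using NUN[of t] IvA[of t] t0 tau by (simp add: N_def)
      then have "Ih t * Sv t \<le> e1 * (NU + 1)"
        by (intro mult_mono) (use T[OF t0(2)] SvA[of t] t0 tau e1 in auto)
      then have "Chv * (Ih t * Sv t) \<le> Chv * (e1 * (NU + 1))"
        using ps by (intro mult_left_mono) auto
      then show "dIv t \<le> Chv*e1*(NU+1) - \<mu>v * Iv t" unfolding dIv_def by (simp add: algebra_simps)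
    qed (use e in auto)
    moreover have "(Chv*e1*(NU+1))/\<mu>v = e/2"
    proof -
      have "\<And>dd::real. dd > 0 \<Longrightarrow> Chv*(e*\<mu>v/(2*Chv*dd))*dd/\<mu>v = e/2" using ps by (simp add: field_simps)
      from this[OF NU1] show ?thesis unfolding e1_def .
    qed
    ultimately have "eventually (\<lambda>t. Iv t \<le> e/2 + e/2) at_top" by simp
    then show "eventually (\<lambda>t. Iv t \<le> e) at_top" by simp
  qed
  have MS1: "MS + 1 > 0" using MS0 by simp
  have small_Iv_Ih: "\<forall>e>0. eventually (\<lambda>t. Ih t \<le> e) at_top"
    if sIv: "\<forall>e>0. eventually (\<lambda>t. Iv t \<le> e) at_top"
  proof (intro allI impI)
    fix e :: real assume e: "e > 0"
    define e1 where "e1 = e*\<mu>h*Nl/(2*Cvh*(MS+1))"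
    have e1: "e1 > 0" unfolding e1_def using e ps MS1 Nl by simp
    obtain T where T: "\<And>t. t \<ge> T \<Longrightarrow> Iv t \<le> e1"
      using sIv e1 unfolding eventually_at_top_linorder by blast
    define T1 where "T1 = max (max T 0 + tau) 1"
    have ev: "eventually (\<lambda>t. Ih t \<le> (Cvh*(e1/Nl)*(MS+1))/\<mu>h + e/2) at_top"
    proof (rule cmp_up_ev[OF ps(3), where T=T1 and f'=dIh])
      show "continuous_on {T1..} Ih" using cont(2) by (rule continuous_on_subset) (auto simp: T1_def)
      fix t :: real assume t: "T1 < t"
      then have t0: "t > 0" "t - tau \<ge> T" "t - tau \<ge> 0" by (auto simp: T1_def)
      show "(Ih has_real_derivative dIh t) (at t)" using d(2)[OF t0(1)] .
      have "Iv (t - tau) / N (t - tau) \<le> e1 / Nl"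
        by (rule frac_le) (use T[OF t0(2)] e1 Nl NlN[OF t0(3)] IvA[of "t - tau"] t0 in auto)
      then have "Iv (t - tau) / N (t - tau) * Sh (t - tau) \<le> e1 / Nl * (MS + 1)"
        by (intro mult_mono) (use MS[of "t - tau"] ShA[of "t - tau"] e1 Nl t0 in auto)
      then have "Cvh * (Iv (t - tau) / N (t - tau) * Sh (t - tau)) \<le> Cvh * (e1 / Nl * (MS + 1))"
        using ps by (intro mult_left_mono) auto
      then show "dIh t \<le> Cvh*(e1/Nl)*(MS+1) - \<mu>h * Ih t" unfolding dIh_def by (simp add: algebra_simps)
    qed (use e in auto)
    have eq: "(Cvh*(e1/Nl)*(MS+1))/\<mu>h = e/2"
    proof -
      have "\<And>dd::real. dd > 0 \<Longrightarrow> (Cvh*((e*\<mu>h*Nl/(2*Cvh*dd))/Nl)*dd)/\<mu>h = e/2" using ps Nl by (simp add: field_simps)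
      from this[OF MS1] show ?thesis unfolding e1_def .
    qed
    from ev have "eventually (\<lambda>t. Ih t \<le> e/2 + e/2) at_top" unfolding eq .
    then show "eventually (\<lambda>t. Ih t \<le> e) at_top" by simp
  qed
  have contra: False
    if sIh: "\<forall>e>0. eventually (\<lambda>t. Ih t \<le> e) at_top"
    and sIv: "\<forall>e>0. eventually (\<lambda>t. Iv t \<le> e) at_top"
  proof -
    define g where "g = (\<lambda>x::real. Cvh * (\<beta>h/(Cvh*x+\<mu>h) - x) / (\<beta>v/\<mu>v + x) * (Chv * (\<beta>v/(Chv*x+\<mu>v) - x)))"
    have g0: "g 0 = Cvh*Chv*\<beta>h/\<mu>h" unfolding g_def using ps by (simp add: field_simps)
    have "Cvh*Chv*\<beta>h/\<mu>h > \<mu>h * \<mu>v"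
      using R ps by (simp add: field_simps power2_eq_square)
    then have g0b: "g 0 > \<mu>h * \<mu>v" using g0 by simp
    have gl: "(g \<longlongrightarrow> g 0) (at_right 0)" unfolding g_def
      by (intro tendsto_intros) (use ps in auto)
    have l1: "((\<lambda>x::real. \<beta>h/(Cvh*x+\<mu>h) - x) \<longlongrightarrow> \<beta>h/(Cvh*0+\<mu>h) - 0) (at_right 0)"
      by (intro tendsto_intros) (use ps in auto)
    have l2: "((\<lambda>x::real. \<beta>v/(Chv*x+\<mu>v) - x) \<longlongrightarrow> \<beta>v/(Chv*0+\<mu>v) - 0) (at_right 0)"
      by (intro tendsto_intros) (use ps in auto)
    have "eventually (\<lambda>x. g x > \<mu>h * \<mu>v) (at_right 0)" by (rule order_tendstoD(1)[OF gl g0b])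
    moreover have "eventually (\<lambda>x. \<beta>h/(Cvh*x+\<mu>h) - x > 0) (at_right 0)"
      by (rule order_tendstoD(1)[OF l1]) (use ps in simp)
    moreover have "eventually (\<lambda>x. \<beta>v/(Chv*x+\<mu>v) - x > 0) (at_right 0)"
      by (rule order_tendstoD(1)[OF l2]) (use ps in simp)
    moreover have "eventually (\<lambda>x. 0 < x) (at_right (0::real))" by (rule eventually_at_right_less)
    ultimately have "eventually (\<lambda>x. g x > \<mu>h * \<mu>v \<and> \<beta>h/(Cvh*x+\<mu>h) - x > 0 \<and> \<beta>v/(Chv*x+\<mu>v) - x > 0 \<and> 0 < x) (at_right (0::real))"
      by eventually_elim auto
    then obtain bb :: real where "bb > 0" and bb: "\<And>y. y > 0 \<Longrightarrow> y < bb \<Longrightarrow> g y > \<mu>h * \<mu>v \<and> \<beta>h/(Cvh*y+\<mu>h) - y > 0 \<and> \<beta>v/(Chv*y+\<mu>v) - y > 0 \<and> 0 < y"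
      unfolding eventually_at_right_field by blast
    define x where "x = bb/2"
    have xx: "g x > \<mu>h * \<mu>v" "\<beta>h/(Cvh*x+\<mu>h) - x > 0" "\<beta>v/(Chv*x+\<mu>v) - x > 0" "0 < x"
      using bb[of x] \<open>bb > 0\<close> by (auto simp: x_def)
    define L1 where "L1 = \<beta>h/(Cvh*x+\<mu>h) - x"
    define L2 where "L2 = \<beta>v/(Chv*x+\<mu>v) - x"
    define U where "U = \<beta>v/\<mu>v + x"
    define ap where "ap = Cvh * L1 / U"
    define bp where "bp = Chv * L2"
    define k where "k = \<mu>h / bp"
    have L1: "L1 > 0" and L2: "L2 > 0" using xx ps by (auto simp: L1_def L2_def)
    have U: "U > 0" unfolding U_def using xx(4) ps by (intro add_pos_pos) auto
    have ap: "ap > 0" and bp: "bp > 0" using L1 L2 U ps by (auto simp: ap_def bp_def)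
    have apbp: "ap * bp > \<mu>h * \<mu>v" using xx(1) unfolding g_def ap_def bp_def L1_def L2_def U_def by simp
    have k: "k > 0" "k * bp = \<mu>h" "k * \<mu>v \<le> ap" using ps bp apbp by (auto simp: k_def field_simps)
    obtain Ta where Ta: "\<And>t. t \<ge> Ta \<Longrightarrow> Iv t \<le> x * Nl \<and> Ih t \<le> x"
    proof -
      have "eventually (\<lambda>t. Iv t \<le> x * Nl \<and> Ih t \<le> x) at_top"
        using sIv[rule_format, of "x * Nl"] sIh[rule_format, of x] xx Nl by (auto intro: eventually_conj)
      then show ?thesis using that unfolding eventually_at_top_linorder by blast
    qed
    define Tr where "Tr = max Ta 1"
    have ev1: "eventually (\<lambda>t. Sh t \<ge> \<beta>h/(Cvh*x+\<mu>h) - x) at_top"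
    proof (rule cmp_lo_ev[where T=Tr and f'=dSh])
      show "Cvh*x+\<mu>h > 0" using ps xx by (simp add: add_pos_pos)
      show "continuous_on {Tr..} Sh" using cont(1) by (rule continuous_on_subset) (auto simp: Tr_def)
      fix t :: real assume t: "Tr < t"
      then have t0: "t > 0" "t \<ge> Ta" by (auto simp: Tr_def)
      show "(Sh has_real_derivative dSh t) (at t)" using d(1)[OF t0(1)] .
      have Nt: "N t \<ge> Nl" "N t > 0" using NlN[of t] Nl t0 by auto
      have "x * Nl \<le> x * N t" using mult_left_mono[OF Nt(1), of x] xx(4) by simp
      then have "Iv t \<le> x * N t" using Ta[OF t0(2)] by linarith
      then have "Iv t / N t \<le> x" using Nt by (simp add: pos_divide_le_eq)
      then have "Iv t / N t * Sh t \<le> x * Sh t" using ShA[of t] t0 tau by (intro mult_right_mono) auto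
      then have "Cvh * (Iv t / N t * Sh t) \<le> Cvh * (x * Sh t)" using ps by (intro mult_left_mono) auto
      then show "dSh t \<ge> \<beta>h - (Cvh*x+\<mu>h) * Sh t" unfolding dSh_def by (simp add: algebra_simps)
    qed (use xx in auto)
    have ev2: "eventually (\<lambda>t. Sv t \<ge> \<beta>v/(Chv*x+\<mu>v) - x) at_top"
    proof (rule cmp_lo_ev[where T=Tr and f'=dSv])
      show "Chv*x+\<mu>v > 0" using ps xx by (simp add: add_pos_pos)
      show "continuous_on {Tr..} Sv" using cont(3) by (rule continuous_on_subset) (auto simp: Tr_def)
      fix t :: real assume t: "Tr < t"
      then have t0: "t > 0" "t \<ge> Ta" by (auto simp: Tr_def)
      show "(Sv has_real_derivative dSv t) (at t)" using d(3)[OF t0(1)] .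
      have "Ih t * Sv t \<le> x * Sv t" using Ta[OF t0(2)] SvA[of t] t0 tau by (intro mult_right_mono) auto
      then have "Chv * (Ih t * Sv t) \<le> Chv * (x * Sv t)" using ps by (intro mult_left_mono) auto
      then show "dSv t \<ge> \<beta>v - (Chv*x+\<mu>v) * Sv t" unfolding dSv_def by (simp add: algebra_simps)
    qed (use xx in auto)
    have ev3: "eventually (\<lambda>t. N t \<le> \<beta>v/\<mu>v + x) at_top"
      by (rule cmp_up_ev[OF ps(4) cN dN]) (use xx in auto)
    obtain T0 where T0: "T0 \<ge> 1" "\<And>t. t \<ge> T0 \<Longrightarrow> Sh t \<ge> L1 \<and> Sv t \<ge> L2 \<and> N t \<le> U"
    proof -
      have "eventually (\<lambda>t. Sh t \<ge> L1 \<and> Sv t \<ge> L2 \<and> N t \<le> U) at_top"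
        using ev1 ev2 ev3 unfolding L1_def L2_def U_def by (auto intro: eventually_conj)
      then obtain T where "\<And>t. t \<ge> T \<Longrightarrow> Sh t \<ge> L1 \<and> Sv t \<ge> L2 \<and> N t \<le> U"
        unfolding eventually_at_top_linorder by blast
      then show ?thesis using that[of "max T 1"] by auto
    qed
    define G where "G = (\<lambda>u. integral {0..u} Iv)"
    have dG: "(G has_real_derivative Iv u) (at u)" if "u > 0" for u
      unfolding G_def by (rule int_deriv[OF cont(4) that])
    define V where "V = (\<lambda>t. Ih t + k * Iv t + ap * (G t - G (t - tau)))"
    define T1 where "T1 = T0 + tau + 1"
    have dV: "(V has_real_derivative (dIh t + k * dIv t + ap * (Iv t - Iv (t - tau)))) (at t)"
      if t: "t > T0 + tau" for t
    proof -
      have t0: "t > 0" "t - tau > 0" using t T0(1) tau by auto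
      have "((\<lambda>t. G (t - tau)) has_real_derivative Iv (t - tau) * 1) (at t)"
        by (rule DERIV_chain2[where g="\<lambda>t. t - tau", OF dG[OF t0(2)]]) (auto intro!: derivative_eq_intros)
      then have dGs: "((\<lambda>t. G (t - tau)) has_real_derivative Iv (t - tau)) (at t)" by simp
      show ?thesis unfolding V_def
        by (intro DERIV_add DERIV_cmult DERIV_diff d t0 dG dGs)
    qed
    have dVnn: "dIh t + k * dIv t + ap * (Iv t - Iv (t - tau)) \<ge> 0" if t: "t > T0 + tau" for t
    proof -
      define s where "s = t - tau"
      have s: "s \<ge> T0" "s > 0" "t \<ge> T0" "t > 0" using t T0(1) tau by (auto simp: s_def)
      have Ns: "N s > 0" "N s \<le> U" using Npos[of s] T0(2)[OF s(1)] s tau by auto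
      have "Iv s / U \<le> Iv s / N s"
        by (rule divide_left_mono) (use Ns IvA[of s] s tau U in auto)
      moreover have "L1 \<le> Sh s" using T0(2)[OF s(1)] by simp
      ultimately have "Iv s / U * L1 \<le> Iv s / N s * Sh s"
        by (intro mult_mono) (use IvA[of s] s tau U L1 Ns in auto)
      then have "Cvh * (Iv s / U * L1) \<le> Cvh * (Iv s / N s * Sh s)" using ps by (intro mult_left_mono) auto
      moreover have "ap * Iv s = Cvh * (Iv s / U * L1)" unfolding ap_def by simp
      ultimately have A1: "dIh t \<ge> ap * Iv s - \<mu>h * Ih t" unfolding dIh_def s_def by (simp add: algebra_simps)
      have "L2 * Ih t \<le> Sv t * Ih t"
        by (intro mult_right_mono) (use T0(2)[OF s(3)] IhA[of t] s tau in auto)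
      then have "Chv * (L2 * Ih t) \<le> Chv * (Sv t * Ih t)" using ps by (intro mult_left_mono) auto
      then have "dIv t \<ge> bp * Ih t - \<mu>v * Iv t" unfolding dIv_def bp_def by (simp add: algebra_simps)
      then have "k * dIv t \<ge> k * (bp * Ih t - \<mu>v * Iv t)" using k(1) by (intro mult_left_mono) auto
      also have "k * (bp * Ih t - \<mu>v * Iv t) = \<mu>h * Ih t - (k * \<mu>v) * Iv t"
        using k(2) by (simp add: algebra_simps)
      finally have A2: "k * dIv t \<ge> \<mu>h * Ih t - (k * \<mu>v) * Iv t" .
      have A3: "(ap - k * \<mu>v) * Iv t \<ge> 0" using k(3) IvA[of t] s tau by simp
      show ?thesis using comb[OF A1 A2 A3] unfolding s_def .
    qed
    have Vmono: "V T1 \<le> V b" if b: "b \<ge> T1" for b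
    proof -
      have "V T1 * exp (0 * T1) \<le> V b * exp (0 * b)"
      proof (rule core_mono[where x'="\<lambda>t. dIh t + k * dIv t + ap * (Iv t - Iv (t - tau))"])
        show "T1 \<le> b" by fact
        have "\<forall>t\<in>{T1..b}. isCont V t"
        proof
          fix t assume "t \<in> {T1..b}"
          then have "t > T0 + tau" by (simp add: T1_def)
          from DERIV_isCont[OF dV[OF this]] show "isCont V t" .
        qed
        then show "continuous_on {T1..b} V" by (rule continuous_at_imp_continuous_on)
        fix t assume "T1 < t" "t < b"
        then have "t > T0 + tau" by (simp add: T1_def)
        then show "(V has_real_derivative dIh t + k * dIv t + ap * (Iv t - Iv (t - tau))) (at t) \<and>
           0 \<le> dIh t + k * dIv t + ap * (Iv t - Iv (t - tau)) + 0 * V t"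
          using dV dVnn by simp
      qed
      then show ?thesis by simp
    qed
    have intI: "Iv integrable_on {0..u}" for u
      by (rule integrable_continuous_real) (use cont(4) in \<open>auto intro: continuous_on_subset\<close>)
    have Gdiff: "G u - G (u - tau) = integral {u - tau..u} Iv" if "u \<ge> tau" for u
      using Henstock_Kurzweil_Integration.integral_combine[where a=0 and c="u - tau" and b=u and f=Iv, OF _ _ intI] that tau unfolding G_def by simp
    have VT1: "V T1 > 0"
    proof -
      have T1t: "T1 \<ge> tau" "T1 > 0" using T1_def T0(1) tau by auto
      have "integral {T1 - tau..T1} Iv \<ge> 0"
        by (rule integral_nonneg) (use IvA tau intI[of T1] T1t in \<open>auto intro: integrable_on_subinterval\<close>)
      then have "ap * (G T1 - G (T1 - tau)) \<ge> 0" using Gdiff[OF T1t(1)] ap by simp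
      moreover have "k * Iv T1 \<ge> 0" using k(1) IvA[of T1] T1t tau by simp
      moreover have "Ih T1 > 0" using IhIv T1t by auto
      ultimately show ?thesis unfolding V_def by linarith
    qed
    define e where "e = V T1 / (2 * (1 + k + ap * tau))"
    have den: "1 + k + ap * tau > 0" using k(1) ap tau by (simp add: add_pos_nonneg)
    have e: "e > 0" unfolding e_def using VT1 den by simp
    obtain T2 where T2: "\<And>t. t \<ge> T2 \<Longrightarrow> Ih t \<le> e \<and> Iv t \<le> e"
    proof -
      have "eventually (\<lambda>t. Ih t \<le> e \<and> Iv t \<le> e) at_top"
        using sIh[rule_format, OF e] sIv[rule_format, OF e] by (auto intro: eventually_conj)
      then show ?thesis using that unfolding eventually_at_top_linorder by blast
    qed
    define b where "b = max T1 T2 + tau"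
    have b: "b \<ge> T1" "b - tau \<ge> T2" "b \<ge> T2" "b \<ge> tau" using tau T1_def T0(1) by (auto simp: b_def)
    have "integral {b - tau..b} Iv \<le> integral {b - tau..b} (\<lambda>_. e)"
      by (rule integral_le) (use intI[of b] b T2 tau in \<open>auto intro: integrable_on_subinterval\<close>)
    also have "\<dots> = tau * e" using tau by simp
    finally have "ap * (G b - G (b - tau)) \<le> ap * (tau * e)" using Gdiff[OF b(4)] ap by (simp add: mult_left_mono)
    moreover have "k * Iv b \<le> k * e" using k(1) T2[OF b(3)] by (simp add: mult_left_mono)
    moreover have "Ih b \<le> e" using T2[OF b(3)] by simp
    ultimately have "V b \<le> e * (1 + k + ap * tau)" unfolding V_def by (simp add: algebra_simps)
    also have "\<dots> = V T1 / 2"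
    proof -
      have "\<And>DD::real. DD > 0 \<Longrightarrow> V T1 / (2 * DD) * DD = V T1 / 2" by simp
      from this[OF den] show ?thesis unfolding e_def .
    qed
    finally show False using Vmono[OF b(1)] VT1 by simp
  qed
  show ?thesis
  proof (intro conjI PSh PSv)
    show "Limsup at_top (\<lambda>t. ereal (Ih t)) > 0"
    proof (rule ccontr)
      assume "\<not> ?thesis"
      then have "Limsup at_top (\<lambda>t. ereal (Ih t)) \<le> 0" by simp
      then have sIh: "\<forall>e>0. eventually (\<lambda>t. Ih t \<le> e) at_top" using Limsup_small by blast
      show False by (rule contra[OF sIh small_Ih_Iv[OF sIh]])
    qed
    show "Limsup at_top (\<lambda>t. ereal (Iv t)) > 0"
    proof (rule ccontr)
      assume "\<not> ?thesis"
      then have "Limsup at_top (\<lambda>t. ereal (Iv t)) \<le> 0" by simp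
      then have sIv: "\<forall>e>0. eventually (\<lambda>t. Iv t \<le> e) at_top" using Limsup_small by blast
      show False by (rule contra[OF small_Iv_Ih[OF sIv] sIv])
    qed
  qed
qed


theorem corollary1:
  fixes \<beta>h \<beta>v \<mu>h \<mu>v Cvh Chv :: real
  assumes "\<beta>h > 0" "\<beta>v > 0" "\<mu>h > 0" "\<mu>v > 0" "Cvh > 0" "Chv > 0"
    and "sqrt (Cvh * Chv * \<beta>h / (\<mu>h ^ 2 * \<mu>v)) > 1"
  shows "\<forall>tau\<ge>0. weakly_persistent \<beta>h \<beta>v \<mu>h \<mu>v Cvh Chv tau"
proof (intro allI impI)
  fix tau :: real assume tau: "tau \<ge> 0"
  have "Cvh * Chv * \<beta>h / (\<mu>h ^ 2 * \<mu>v) > 1" using assms(7) by simp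
  moreover have "\<mu>h ^ 2 * \<mu>v > 0" using assms by simp
  ultimately have R: "Cvh * Chv * \<beta>h > \<mu>h ^ 2 * \<mu>v" by (simp add: pos_less_divide_eq)
  show "weakly_persistent \<beta>h \<beta>v \<mu>h \<mu>v Cvh Chv tau"
    unfolding weakly_persistent_def
    using main[OF assms(1-6) R tau] by blast
qed

end
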